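(* Let $\mathbb{H}$ be a simple hypergraph of order $n$ with strong independence number $\bar\alpha(\mathbb{H})$. Then for all non-negative integers $h>k$, $$\lambda_{h,k}(\mathbb{H})\le nh+\bar\alpha(\mathbb{H})(k-h)-k.$$
   Context: A set $W\subseteq V$ in a hypergraph $\mathbb{H}=(V,E)$ is strong stable if $|W\cap e|\le 1$ for every $e\in E$; $\bar\alpha(\mathbb{H})$ is the maximum cardinality of a strong stable set. For non-negative integers $h>k$, an $L(h,k)$-colouring of $\mathbb{H}$ is a map $f:V\to\mathbb{Z}_{\ge 0}$ such that $|f(u)-f(v)|\ge h$ whenever $u\ne v$ lie in a common edge, and $|f(u)-f(v)|\ge k$ whenever there are edges $e_1\ni v$, $e_2\ni u$ with $(e_1\cap e_2)\setminus\{u,v\}\ne\emptyset$. The span is $\max f-\min f$; $\lambda_{h,k}(\mathbb{H})$ is the minimum span of an $L(h,k)$-colouring. A hypergraph is simple if no edge contains another and every edge has at least two vertices. *)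

theory Defs
  imports Main
begin

definition hypergraph :: "'a set \<Rightarrow> 'a set set \<Rightarrow> bool" where
  "hypergraph V E \<longleftrightarrow> finite V \<and> (\<forall>e\<in>E. e \<subseteq> V)"

definition simple_hypergraph :: "'a set \<Rightarrow> 'a set set \<Rightarrow> bool" where
  "simple_hypergraph V E \<longleftrightarrow> hypergraph V E \<and>
     (\<forall>e\<in>E. card e \<ge> 2) \<and>
     (\<forall>e1\<in>E. \<forall>e2\<in>E. e1 \<subseteq> e2 \<longrightarrow> e1 = e2)"

definition strong_stable :: "'a set \<Rightarrow> 'a set set \<Rightarrow> 'a set \<Rightarrow> bool" where
  "strong_stable V E W \<longleftrightarrow> W \<subseteq> V \<and> (\<forall>e\<in>E. card (W \<inter> e) \<le> 1)"

definition strong_stability_number :: "'a set \<Rightarrow> 'a set set \<Rightarrow> nat" where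
  "strong_stability_number V E = Max {card W | W. strong_stable V E W}"

definition Lhk_colouring :: "nat \<Rightarrow> nat \<Rightarrow> 'a set \<Rightarrow> 'a set set \<Rightarrow> ('a \<Rightarrow> nat) \<Rightarrow> bool" where
  "Lhk_colouring h k V E f \<longleftrightarrow>
     (\<forall>u\<in>V. \<forall>v\<in>V. u \<noteq> v \<longrightarrow>
        ((\<exists>e\<in>E. u \<in> e \<and> v \<in> e) \<longrightarrow> \<bar>int (f u) - int (f v)\<bar> \<ge> int h) \<and>
        ((\<exists>e1\<in>E. \<exists>e2\<in>E. v \<in> e1 \<and> u \<in> e2 \<and> (e1 \<inter> e2) - {u, v} \<noteq> {})
            \<longrightarrow> \<bar>int (f u) - int (f v)\<bar> \<ge> int k))"

definition span :: "'a set \<Rightarrow> ('a \<Rightarrow> nat) \<Rightarrow> nat" where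
  "span V f = Max (f ` V) - Min (f ` V)"

definition lambda_hk :: "nat \<Rightarrow> nat \<Rightarrow> 'a set \<Rightarrow> 'a set set \<Rightarrow> nat" where
  "lambda_hk h k V E = Inf {span V f | f. Lhk_colouring h k V E f}"

end

theory Submission
  imports Defs
begin

theorem theorem3p2:
  fixes V :: "'a set" and E :: "'a set set" and h k :: nat
  assumes "simple_hypergraph V E"
    and "V \<noteq> {}"
    and "k < h"
  shows "int (lambda_hk h k V E) \<le>
           int (card V) * int h + int (strong_stability_number V E) * (int k - int h) - int k"
proof -
  have finV: "finite V" and EV: "\<forall>e\<in>E. e \<subseteq> V"
    using assms(1) by (auto simp: simple_hypergraph_def hypergraph_def)
  let ?S = "{card W | W. strong_stable V E W}"
  have finS: "finite ?S"
  proof -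
    have "?S \<subseteq> card ` Pow V" by (auto simp: strong_stable_def)
    thus ?thesis using finV by (meson finite_Pow_iff finite_imageI finite_subset)
  qed
  have neS: "?S \<noteq> {}" using strong_stable_def[of V E "{}"] by auto
  obtain W where sW: "strong_stable V E W" and aW: "card W = strong_stability_number V E"
    using Max_in[OF finS neS] unfolding strong_stability_number_def by auto
  define a where "a = card W"
  define n where "n = card V"
  have WV: "W \<subseteq> V" and We: "\<And>e. e \<in> E \<Longrightarrow> card (W \<inter> e) \<le> 1"
    using sW by (auto simp: strong_stable_def)
  have finW: "finite W" using WV finV finite_subset by blast
  obtain v0 where v0: "v0 \<in> V" using assms(2) by auto
  have "strong_stable V E {v0}"
    unfolding strong_stable_def using v0
    by (auto intro: order_trans[OF card_mono[of "{v0}"]])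
  hence "card {v0} \<in> ?S" by blast
  hence "1 \<le> strong_stability_number V E"
    unfolding strong_stability_number_def using Max_ge[OF finS] by fastforce
  hence a1: "1 \<le> a" using aW a_def by simp
  have an: "a \<le> n" unfolding a_def n_def using card_mono[OF finV WV] .
  have cVW: "card (V - W) = n - a" unfolding n_def a_def using card_Diff_subset[OF finW WV] .
  obtain g1 where g1: "bij_betw g1 {0..<a} W"
    using ex_bij_betw_nat_finite[OF finW] a_def by auto
  obtain g2 where g2: "bij_betw g2 {0..<n-a} (V - W)"
    using ex_bij_betw_nat_finite[of "V - W"] finV cVW by auto
  define i1 where "i1 = inv_into {0..<a} g1"
  define i2 where "i2 = inv_into {0..<n-a} g2"
  have i1b: "bij_betw i1 W {0..<a}" unfolding i1_def by (rule bij_betw_inv_into[OF g1])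
  have i2b: "bij_betw i2 (V - W) {0..<n-a}" unfolding i2_def by (rule bij_betw_inv_into[OF g2])
  define f where "f v = (if v \<in> W then k * i1 v else (a - 1) * k + (i2 v + 1) * h)" for v
  have fW: "v \<in> W \<Longrightarrow> f v \<le> (a - 1) * k" for v
  proof -
    assume v: "v \<in> W"
    hence "i1 v < a" using i1b unfolding bij_betw_def by auto
    hence "k * i1 v \<le> k * (a - 1)" by (intro mult_le_mono2) simp
    thus ?thesis using v unfolding f_def by (simp add: mult.commute)
  qed
  have fnW: "v \<in> V - W \<Longrightarrow> f v \<ge> (a - 1) * k + h" for v unfolding f_def by auto
  have fnW2: "v \<in> V - W \<Longrightarrow> f v \<le> (a - 1) * k + (n - a) * h" for v
  proof -
    assume v: "v \<in> V - W"
    hence "i2 v < n - a" using i2b unfolding bij_betw_def by auto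
    hence "(i2 v + 1) * h \<le> (n - a) * h" by (intro mult_le_mono1) simp
    thus ?thesis using v unfolding f_def by auto
  qed
  have key: "u \<in> V \<Longrightarrow> v \<in> V \<Longrightarrow> u \<noteq> v \<Longrightarrow>
     \<bar>int (f u) - int (f v)\<bar> \<ge> int k \<and> (\<not> (u \<in> W \<and> v \<in> W) \<longrightarrow> \<bar>int (f u) - int (f v)\<bar> \<ge> int h)" for u v
  proof -
    assume u: "u \<in> V" and v: "v \<in> V" and uv: "u \<noteq> v"
    show ?thesis
    proof (cases "u \<in> W")
      case uW: True
      show ?thesis
      proof (cases "v \<in> W")
        case vW: True
        have "i1 u \<noteq> i1 v" using i1b uW vW uv unfolding bij_betw_def inj_on_def by auto
        hence "\<bar>int (i1 u) - int (i1 v)\<bar> \<ge> 1" by linarith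
        hence "int k * 1 \<le> int k * \<bar>int (i1 u) - int (i1 v)\<bar>" by (intro mult_left_mono) auto
        also have "\<dots> = \<bar>int (f u) - int (f v)\<bar>" using uW vW
          by (simp add: f_def abs_mult flip: right_diff_distrib)
        finally show ?thesis using uW vW by simp
      next
        case vW: False
        have "f u \<le> (a - 1) * k" using fW uW .
        moreover have "f v \<ge> (a - 1) * k + h" using fnW v vW by auto
        ultimately show ?thesis using assms(3) by linarith
      qed
    next
      case uW: False
      show ?thesis
      proof (cases "v \<in> W")
        case vW: True
        have "f v \<le> (a - 1) * k" using fW vW .
        moreover have "f u \<ge> (a - 1) * k + h" using fnW u uW by auto
        ultimately show ?thesis using assms(3) by linarith
      next
        case vW: False
        have "i2 u \<noteq> i2 v" using i2b uW vW u v uv unfolding bij_betw_def inj_on_def by auto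
        hence "\<bar>int (i2 u) - int (i2 v)\<bar> \<ge> 1" by linarith
        hence "int h * 1 \<le> int h * \<bar>int (i2 u) - int (i2 v)\<bar>" by (intro mult_left_mono) auto
        also have "\<dots> = \<bar>int (f u) - int (f v)\<bar>" using uW vW
          by (simp add: f_def abs_mult flip: left_diff_distrib)
        finally show ?thesis using assms(3) uW vW by simp
      qed
    qed
  qed
  have col: "Lhk_colouring h k V E f"
    unfolding Lhk_colouring_def
  proof (intro ballI impI conjI)
    fix u v assume u: "u \<in> V" and v: "v \<in> V" and uv: "u \<noteq> v"
    { assume "\<exists>e\<in>E. u \<in> e \<and> v \<in> e"
      then obtain e where e: "e \<in> E" "u \<in> e" "v \<in> e" by auto
      have fe: "finite e" using EV e(1) finV finite_subset by blast
      have "\<not> (u \<in> W \<and> v \<in> W)"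
      proof
        assume "u \<in> W \<and> v \<in> W"
        hence "{u, v} \<subseteq> W \<inter> e" using e by auto
        hence "card {u, v} \<le> card (W \<inter> e)" using fe by (intro card_mono) auto
        thus False using We[OF e(1)] uv by simp
      qed
      thus "int h \<le> \<bar>int (f u) - int (f v)\<bar>" using key[OF u v uv] by blast }
    show "int k \<le> \<bar>int (f u) - int (f v)\<bar>" using key[OF u v uv] by blast
  qed
  have "Max (f ` V) \<le> (a - 1) * k + (n - a) * h"
    using finV assms(2) fW fnW2 WV
    by (subst Max_le_iff) (auto intro: order_trans[OF _ le_add1])
  hence sp: "span V f \<le> (a - 1) * k + (n - a) * h" unfolding span_def by linarith
  have "lambda_hk h k V E \<le> span V f"
    unfolding lambda_hk_def using col by (intro cInf_lower) auto
  hence "int (lambda_hk h k V E) \<le> int ((a - 1) * k + (n - a) * h)" using sp by linarith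
  also have "\<dots> = int n * int h + int a * (int k - int h) - int k"
  proof -
    have "int ((a - 1) * k + (n - a) * h) = (int a - 1) * int k + (int n - int a) * int h"
      using a1 an by (simp add: of_nat_diff)
    thus ?thesis by (simp add: algebra_simps)
  qed
  finally show ?thesis using aW a_def n_def by simp
qed

end
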